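(* Let $(V_m)_{m\ge1}$ be a sequence of positive numbers which is subadditive, i.e. $V_{m+n}\le V_m+V_n$ for all $m,n\ge1$. Then \[ \sum_{i\ge1}\frac{V_{2^i}^2}{2^i}\le 65\sum_{k\ge1}\frac{V_k^2}{k^2}. \] *)

theory Defs
  imports "HOL-Analysis.Analysis"
begin

end

theory Submission
  imports Defs
begin

theorem lemma1:
  fixes V :: "nat \<Rightarrow> real"
  assumes pos: "\<And>m. m \<ge> 1 \<Longrightarrow> V m > 0"
    and subadd: "\<And>m n. m \<ge> 1 \<Longrightarrow> n \<ge> 1 \<Longrightarrow> V (m + n) \<le> V m + V n"
  shows "(\<Sum>i. ennreal ((V (2 ^ Suc i))\<^sup>2 / 2 ^ Suc i))
           \<le> 65 * (\<Sum>k. ennreal ((V (Suc k))\<^sup>2 / (real (Suc k))\<^sup>2))"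
proof -
  define b where "b k = (V k)\<^sup>2 / (real k)\<^sup>2" for k
  define a where "a i = (V (2 ^ Suc i))\<^sup>2 / 2 ^ Suc i" for i
  define c where "c j = (\<Sum>k\<in>{2^j..<2^Suc j}. b k)" for j
  have b0: "b 0 = 0" by (simp add: b_def)
  have bnn: "b k \<ge> 0" for k by (simp add: b_def)
  have cnn: "c j \<ge> 0" for j unfolding c_def by (intro sum_nonneg bnn)
  have Vk: "(V k)\<^sup>2 = (real k)\<^sup>2 * b k" if "k \<ge> 1" for k
    using that by (simp add: b_def)
  have csum: "(\<Sum>j<M. c j) = (\<Sum>k<2^M. b k) - b 0" for M
  proof (induction M)
    case 0 then show ?case by simp
  next
    case (Suc M)
    have "(\<Sum>k<2^Suc M. b k) = (\<Sum>k<2^M. b k) + c M"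
      unfolding c_def lessThan_atLeast0
      by (subst sum.atLeastLessThan_concat[symmetric]) auto
    then show ?case using Suc by simp
  qed
  have a0: "a 0 \<le> 2 * c 0"
  proof -
    have "V 2 \<le> 2 * V 1" using subadd[of 1 1] by (simp add: numeral_2_eq_2)
    moreover have "V 2 > 0" using pos[of 2] by simp
    ultimately have "(V 2)\<^sup>2 \<le> (2 * V 1)\<^sup>2" by (intro power_mono) auto
    moreover have "{1..<2::nat} = {1}" by auto
    ultimately show ?thesis by (simp add: a_def c_def b_def power2_eq_square)
  qed
  have ai: "a i \<le> 5 * (c (i - 1) + c i)" if "i \<ge> 1" for i
  proof -
    define m :: nat where "m = 2 ^ (i - 1)"
    have m1: "m \<ge> 1" by (simp add: m_def)
    obtain j where ij: "i = Suc j" using \<open>i \<ge> 1\<close> by (cases i) auto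
    have n: "2 ^ Suc i = 4 * m" unfolding m_def ij by simp
    have cim: "c (i - 1) = (\<Sum>k\<in>{m..<2*m}. b k)" unfolding c_def m_def ij by simp
    have ci: "c i = (\<Sum>k\<in>{2*m..<4*m}. b k)" unfolding c_def m_def ij by simp
    have key: "(V (4*m))\<^sup>2 \<le> 8 * m\<^sup>2 * b k + 18 * m\<^sup>2 * b (4*m - k)"
      if k: "k \<in> {m..<2*m}" for k
    proof -
      from k have k1: "k \<ge> 1" "4*m - k \<ge> 1" using m1 by auto
      have "V (4*m) = V (k + (4*m - k))" using k by simp
      also have "\<dots> \<le> V k + V (4*m - k)" using subadd k1 by blast
      finally have le: "V (4*m) \<le> V k + V (4*m - k)" .
      have "V (4*m) > 0" using pos m1 by simp
      hence "(V (4*m))\<^sup>2 \<le> (V k + V (4*m - k))\<^sup>2" using le by (intro power_mono) auto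
      also have "\<dots> \<le> 2 * (V k)\<^sup>2 + 2 * (V (4*m - k))\<^sup>2"
      proof -
        have "(V k + V (4*m - k))\<^sup>2 + (V k - V (4*m - k))\<^sup>2 = 2 * (V k)\<^sup>2 + 2 * (V (4*m - k))\<^sup>2"
          by (simp add: power2_eq_square algebra_simps)
        moreover have "(V k - V (4*m - k))\<^sup>2 \<ge> 0" by simp
        ultimately show ?thesis by linarith
      qed
      also have "(V k)\<^sup>2 \<le> 4 * m\<^sup>2 * b k"
      proof -
        have "(real k)\<^sup>2 \<le> (2 * real m)\<^sup>2" using k by (intro power_mono) auto
        then show ?thesis using Vk[OF k1(1)] bnn[of k]
          by (simp add: power_mult_distrib mult_right_mono)
      qed
      also have "(V (4*m - k))\<^sup>2 \<le> 9 * m\<^sup>2 * b (4*m - k)"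
      proof -
        have "real (4*m - k) \<le> 3 * real m" using k by auto
        hence "(real (4*m-k))\<^sup>2 \<le> (3 * real m)\<^sup>2" by (intro power_mono) auto
        then show ?thesis using Vk[OF k1(2)] bnn[of "4*m-k"]
          by (simp add: power_mult_distrib mult_right_mono)
      qed
      finally show ?thesis by simp
    qed
    have "real m * (V (4*m))\<^sup>2 = (\<Sum>k\<in>{m..<2*m}. (V (4*m))\<^sup>2)" by simp
    also have "\<dots> \<le> (\<Sum>k\<in>{m..<2*m}. 8 * m\<^sup>2 * b k + 18 * m\<^sup>2 * b (4*m - k))"
      by (intro sum_mono key)
    also have "\<dots> = 8 * m\<^sup>2 * c (i - 1) + 18 * m\<^sup>2 * (\<Sum>k\<in>{m..<2*m}. b (4*m - k))"
      unfolding cim by (simp add: sum.distrib sum_distrib_left[symmetric])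
    also have "(\<Sum>k\<in>{m..<2*m}. b (4*m - k)) \<le> c i"
    proof -
      have "(\<Sum>k\<in>{m..<2*m}. b (4*m - k)) = (\<Sum>j\<in>(\<lambda>k. 4*m - k) ` {m..<2*m}. b j)"
        by (subst sum.reindex) (auto simp: inj_on_def)
      also have "\<dots> \<le> (\<Sum>k\<in>{2*m..<4*m}. b k)"
        by (intro sum_mono2) (auto simp: bnn)
      finally show ?thesis using ci by simp
    qed
    finally have "real m * (V (4*m))\<^sup>2 \<le> 8 * m\<^sup>2 * c (i - 1) + 18 * m\<^sup>2 * c i"
      by (simp add: mult_left_mono)
    also have "\<dots> \<le> real m * (20 * real m * (c (i - 1) + c i))"
      using cnn[of "i-1"] cnn[of i] m1 by (simp add: power2_eq_square algebra_simps)
    finally have "(V (4*m))\<^sup>2 \<le> 20 * real m * (c (i - 1) + c i)"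
      using m1 by simp
    moreover have m2: "(2::real)^i = 2 * real m" unfolding m_def ij by simp
    ultimately show ?thesis unfolding a_def n using m1 by (simp add: field_simps m2)
  qed
  define d where "d i = (if i = 0 then 0 else c (i - 1))" for i
  have ad: "a i \<le> 5 * (d i + c i)" for i
    using a0 ai[of i] cnn[of 0] by (cases "i = 0") (auto simp: d_def)
  have dsum: "(\<Sum>i<N. d i) \<le> (\<Sum>i<N. c i)" for N
  proof (cases N)
    case (Suc M)
    have "(\<Sum>i<N. d i) = (\<Sum>i<M. c i)" unfolding Suc
      by (subst sum.lessThan_Suc_shift) (simp add: d_def)
    also have "\<dots> \<le> (\<Sum>i<N. c i)" unfolding Suc using cnn by simp
    finally show ?thesis .
  qed simp
  have fin: "(\<Sum>i<N. a i) \<le> 10 * (\<Sum>k<2^N. b (Suc k))" for N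
  proof -
    have "(\<Sum>i<N. a i) \<le> (\<Sum>i<N. 5 * (d i + c i))" by (intro sum_mono ad)
    also have "\<dots> = 5 * (\<Sum>i<N. d i) + 5 * (\<Sum>i<N. c i)"
      by (simp add: sum.distrib sum_distrib_left)
    also have "\<dots> \<le> 10 * (\<Sum>i<N. c i)" using dsum[of N] by simp
    also have "(\<Sum>i<N. c i) \<le> (\<Sum>k<2^N. b (Suc k))"
    proof -
      have "(\<Sum>k<Suc (2^N). b k) = b 0 + (\<Sum>k<2^N. b (Suc k))"
        by (rule sum.lessThan_Suc_shift)
      moreover have "(\<Sum>k<2^N. b k) \<le> (\<Sum>k<Suc (2^N). b k)" using bnn by simp
      ultimately show ?thesis using csum[of N] b0 by simp
    qed
    finally show ?thesis by simp
  qed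
  let ?R = "(\<Sum>k. ennreal ((V (Suc k))\<^sup>2 / (real (Suc k))\<^sup>2))"
  have "(\<Sum>i. ennreal (a i)) \<le> 65 * ?R"
  proof (rule suminf_le_const)
    show "summable (\<lambda>i. ennreal (a i))" by (rule summableI)
    fix N
    have "(\<Sum>i<N. ennreal (a i)) = ennreal (\<Sum>i<N. a i)"
      by (rule sum_ennreal) (simp add: a_def)
    also have "\<dots> \<le> ennreal (10 * (\<Sum>k<2^N. b (Suc k)))"
      using fin by (rule ennreal_leI)
    also have "\<dots> = 10 * (\<Sum>k<2^N. ennreal (b (Suc k)))"
    proof -
      have "0 \<le> (\<Sum>k<2^N. b (Suc k))" by (intro sum_nonneg bnn)
      then show ?thesis by (simp add: ennreal_mult sum_ennreal bnn)
    qed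
    finally have h: "(\<Sum>i<N. ennreal (a i)) \<le> 10 * (\<Sum>k<2^N. ennreal (b (Suc k)))" .
    have "(\<Sum>k<2^N. ennreal (b (Suc k))) \<le> ?R"
      unfolding b_def by (intro sum_le_suminf summableI) auto
    hence "10 * (\<Sum>k<2^N. ennreal (b (Suc k))) \<le> 10 * ?R" by (rule mult_left_mono) simp
    also have "10 * ?R \<le> 65 * ?R" by (rule mult_right_mono) simp_all
    finally show "(\<Sum>i<N. ennreal (a i)) \<le> 65 * ?R" using h by (rule order_trans[rotated])
  qed
  then show ?thesis by (simp add: a_def)
qed

end
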